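(* Let $k=3$, $t\ge 2$, $m=2^t-3$, and let $n$ be an integer with $0\le n\le m$, $i=m-n$. Then in $\mathbb{F}_2[w_2,w_3]$, \[ q_iq_n+q_{i+1}q_{n-1}+w_3q_{i-1}q_{n-2}=0, \] a homogeneous relation of degree $2^t-3$ among $q_{n-2},q_{n-1},q_n$.
   Context: In $\mathbb{F}_2[w_2,w_3]$ ($\deg w_2=2,\deg w_3=3$), $q_0=1$, $q_m=0$ for $m<0$, and $q_m=w_2q_{m-2}+w_3q_{m-3}$ for $m\ge1$. *)

theory Defs
  imports "HOL-Library.Z2" "HOL-Computational_Algebra.Polynomial"
begin

text \<open>F_2[w2,w3] is modelled as (bit poly) poly: the inner variable is w2, the outer variable is w3.\<close>

definition w2 :: "bit poly poly" where "w2 = [:[:0, 1:]:]"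
definition w3 :: "bit poly poly" where "w3 = [:0, 1:]"

function q :: "int \<Rightarrow> bit poly poly" where
  "q m = (if m < 0 then 0 else if m = 0 then 1 else w2 * q (m - 2) + w3 * q (m - 3))"
  by auto
termination by (relation "measure (\<lambda>m. nat m)") auto

end

theory Submission
  imports Defs
begin

declare q.simps[simp del]

lemma q_neg: "m < 0 \<Longrightarrow> q m = 0" by (subst q.simps) simp
lemma q_0: "q 0 = 1" by (subst q.simps) simp
lemma q_rec: "m \<ge> 1 \<Longrightarrow> q m = w2 * q (m - 2) + w3 * q (m - 3)" by (subst q.simps) simp
lemma q_1: "q 1 = 0" by (simp add: q_rec q_neg)
lemma q_2: "q 2 = w2" by (simp add: q_rec q_neg q_0)

lemma char2: "(x::bit poly poly) + x = 0"
proof -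
  have "(1::bit) + 1 = 0" by simp
  then have "(1::bit poly poly) + 1 = 0"
    by (simp add: one_pCons)
  then have "(1 + 1) * x = 0" by simp
  then show ?thesis by (simp add: distrib_right)
qed

definition S :: "int \<Rightarrow> int \<Rightarrow> bit poly poly" where
  "S i n = q i * q n + q (i + 1) * q (n - 1) + w3 * q (i - 1) * q (n - 2)"

lemma S_eq: "i \<ge> 0 \<Longrightarrow> S i (int k) = q (i + int k)"
proof (induction k rule: less_induct)
  case (less k)
  show ?case
  proof (cases "k < 3")
    case True
    then have "k = 0 \<or> k = 1 \<or> k = 2" by auto
    then show ?thesis
    proof (elim disjE)
      assume "k = 0" then show ?thesis by (simp add: S_def q_neg q_0)
    next
      assume "k = 1" then show ?thesis by (simp add: S_def q_neg q_0 q_1)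
    next
      assume "k = 2" then show ?thesis using less.prems
        by (simp add: S_def q_neg q_0 q_1 q_2 q_rec[of "i+2"] algebra_simps)
    qed
  next
    case False
    then obtain j where k: "k = j + 3" by (metis add.commute le_Suc_ex not_less)
    have a: "q (int k) = w2 * q (int j + 1) + w3 * q (int j)"
      using q_rec[of "int k"] k by (simp add: add.commute)
    have b: "q (int k - 1) = w2 * q (int j) + w3 * q (int j - 1)"
      using q_rec[of "int k - 1"] k by (simp add: algebra_simps)
    have c: "q (int k - 2) = w2 * q (int j - 1) + w3 * q (int j - 2)"
      using q_rec[of "int k - 2"] k by (simp add: algebra_simps)
    have "S i (int k) = w2 * S i (int (j+1)) + w3 * S i (int j)"
      unfolding S_def a b c by (simp add: algebra_simps)
    also have "\<dots> = w2 * q (i + int j + 1) + w3 * q (i + int j)"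
      using less.IH[of "j+1"] less.IH[of j] less.prems k by (simp add: algebra_simps)
    also have "\<dots> = q (i + int k)"
      using q_rec[of "i + int k"] k less.prems by (simp add: algebra_simps)
    finally show ?thesis .
  qed
qed

lemma q_odd: "n \<ge> 0 \<Longrightarrow> q (2 * n + 1) = w3 * q (n - 1) ^ 2"
proof -
  assume n: "n \<ge> 0"
  have "q (2 * n + 1) = S (n + 1) (int (nat n))"
    using S_eq[of "n+1" "nat n"] n by (simp add: algebra_simps)
  also have "\<dots> = q (n + 1) * q n + q (n + 2) * q (n - 1) + w3 * q n * q (n - 2)"
    using n by (simp add: S_def algebra_simps)
  also have "\<dots> = w3 * q (n - 1) ^ 2 + (w2 * q (n - 1) * q n + w2 * q (n - 1) * q n)
       + (w3 * q n * q (n - 2) + w3 * q n * q (n - 2))"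
    using q_rec[of "n+1"] q_rec[of "n+2"] n by (simp add: algebra_simps power2_eq_square)
  also have "\<dots> = w3 * q (n - 1) ^ 2" by (simp add: char2)
  finally show ?thesis .
qed

lemma q_pow: "t \<ge> 2 \<Longrightarrow> q (2 ^ t - 3) = 0"
proof (induction t rule: dec_induct)
  case base
  then show ?case by (simp add: q_1)
next
  case (step t)
  have "(2::int) ^ t \<ge> 2 ^ 2" using step.hyps
    by (intro power_increasing) auto
  then have n: "(2::int) ^ t - 2 \<ge> 0" by simp
  have "q (2 ^ Suc t - 3) = q (2 * (2 ^ t - 2) + 1)" by simp
  also have "\<dots> = w3 * q (2 ^ t - 2 - 1) ^ 2" using q_odd[OF n] .
  also have "\<dots> = 0" using step.IH by simp
  finally show ?case .
qed

theorem mainTheorem9: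
  fixes t :: nat and m n i :: int
  assumes "t \<ge> 2" and "m = 2 ^ t - 3" and "0 \<le> n" and "n \<le> m" and "i = m - n"
  shows "q i * q n + q (i + 1) * q (n - 1) + w3 * q (i - 1) * q (n - 2) = 0"
proof -
  have "q i * q n + q (i + 1) * q (n - 1) + w3 * q (i - 1) * q (n - 2) = S i (int (nat n))"
    using assms by (simp add: S_def)
  also have "\<dots> = q m" using S_eq[of i "nat n"] assms by simp
  also have "\<dots> = 0" using q_pow assms by simp
  finally show ?thesis .
qed

end
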